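(* Let $q$ be a prime power and $\ell$ an odd prime with $\gcd(\ell,q)=1$, and let $m$ be a positive integer. Assume $f=\mathrm{ord}_\ell(q)$ is odd. Let $g$ be a fixed generator of the cyclic group $\mathbb Z_{\ell^m}^*$. For $1\le r\le m$ let $\lambda(r)=\mathrm{ord}_{\ell^r}(q)$ and $\delta(r)=\phi(\ell^r)/\lambda(r)$, where $\phi$ is Euler's function. Then the sets $C_0=\{0\}$, $$C_{\ell^{m-r}g^k}=\{\ell^{m-r}g^k,\ell^{m-r}g^kq,\dots,\ell^{m-r}g^kq^{\lambda(r)-1}\},\qquad C_{-\ell^{m-r}g^k}=\{-\ell^{m-r}g^k,-\ell^{m-r}g^kq,\dots,-\ell^{m-r}g^kq^{\lambda(r)-1}\},$$ for $1\le r\le m$ and $0\le k\le\frac{\delta(r)}{2}-1$ (elements taken modulo $\ell^m$), are pairwise distinct and constitute all the distinct $q$-cyclotomic cosets modulo $\ell^m$.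
   Context: The $q$-cyclotomic coset of an integer $t$ modulo $\ell^m$ is $C_t=\{tq^i \bmod \ell^m: i\ge0\}$. *)

theory Defs
  imports "HOL-Number_Theory.Number_Theory"
begin

definition cyc_coset :: "nat \<Rightarrow> nat \<Rightarrow> int \<Rightarrow> int set" where
  "cyc_coset q n t = {(t * int q ^ i) mod int n | i. True}"

definition lam :: "nat \<Rightarrow> nat \<Rightarrow> nat \<Rightarrow> nat" where
  "lam q l r = ord (l ^ r) q"

definition dlt :: "nat \<Rightarrow> nat \<Rightarrow> nat \<Rightarrow> nat" where
  "dlt q l r = totient (l ^ r) div lam q l r"

definition listed_set :: "nat \<Rightarrow> nat \<Rightarrow> nat \<Rightarrow> nat \<Rightarrow> int \<Rightarrow> nat \<Rightarrow> nat \<Rightarrow> int set" where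
  "listed_set q l m g s r k =
     {(s * int (l ^ (m - r)) * int g ^ k * int q ^ j) mod int (l ^ m) | j. j < lam q l r}"

end

theory Submission
  imports Defs
begin


lemma primroot_gen:
  assumes "n > 1" "residue_primroot n g" "coprime x n"
  shows "\<exists>i<totient n. [g ^ i = x] (mod n)"
proof -
  have "x mod n > 0"
  proof (rule ccontr)
    assume "\<not> x mod n > 0"
    hence "n dvd x" by auto
    with assms(3) have "n dvd 1"
      by (meson coprime_common_divisor dvd_refl)
    with assms(1) show False by simp
  qed
  hence "x mod n \<in> totatives n"
    using assms by (auto simp: in_totatives_iff intro: less_imp_le)
  with residue_primroot_is_generator[OF assms(1,2)]
  obtain i where "i < totient n" "g ^ i mod n = x mod n"
    unfolding bij_betw_def by (metis (no_types, lifting) imageE lessThan_iff)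
  thus ?thesis by (auto simp: cong_def)
qed

context
  fixes n q g :: nat
  assumes n2: "n > 2" and pr: "residue_primroot n g" and cq: "coprime n q"
    and neg: "\<And>j. \<not> [int q ^ j = -1] (mod int n)"
begin

lemma ordg: "ord n g = totient n" and cg: "coprime n g" and phipos: "totient n > 0"
  using pr by (auto simp: residue_primroot_def)

lemma expcong: "[g ^ a = g ^ b] (mod n) \<longleftrightarrow> [a = b] (mod totient n)"
  using order_divides_expdiff[OF cg] ordg by simp

lemma half_exists: "\<exists>h. [int g ^ h = -1] (mod int n) \<and> 2 * h = totient n"
proof -
  have "coprime (n - 1) n" using n2 coprime_diff_one_left_nat[of n] by linarith
  then obtain i where i: "i < totient n" "[g ^ i = n - 1] (mod n)"
    using primroot_gen[OF _ pr] n2 by fastforce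
  have ii: "[int g ^ i = -1] (mod int n)"
  proof -
    have "[int (g ^ i) = int (n - 1)] (mod int n)" using i(2) cong_int_iff by blast
    moreover have "int (n - 1) = int n + (-1)" using n2 by simp
    moreover have "[int n + (-1) = -1] (mod int n)"
      by (simp add: cong_iff_dvd_diff)
    ultimately show ?thesis by (metis cong_trans of_nat_power)
  qed
  have "[(int g ^ i) ^ 2 = (-1) ^ 2] (mod int n)" using ii cong_pow by blast
  hence "[int (g ^ (2 * i)) = int 1] (mod int n)"
    by (simp add: power_mult[symmetric] mult.commute)
  hence "[g ^ (2 * i) = 1] (mod n)" using cong_int_iff by blast
  hence d: "totient n dvd 2 * i" using ord_divides ordg by metis
  have "i \<noteq> 0"
  proof
    assume "i = 0"
    with ii have "[1 = -1] (mod int n)" by simp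
    hence "int n dvd 2" by (simp add: cong_iff_dvd_diff)
    with n2 show False by (auto dest: zdvd_imp_le)
  qed
  from d obtain c where c: "2*i = totient n * c" by (auto elim: dvdE)
  have "c < 2"
  proof (rule ccontr)
    assume "\<not> c < 2" hence "totient n * 2 \<le> totient n * c" by simp
    with c i(1) show False by linarith
  qed
  moreover have "c \<noteq> 0"
  proof
    assume "c = 0" with c \<open>i \<noteq> 0\<close> show False by simp
  qed
  ultimately have "c = 1" by linarith
  with c have "2 * i = totient n" by simp
  with ii show ?thesis by blast
qed

context
  fixes e :: nat
  assumes epos: "e > 0" and ge: "[g ^ e = q] (mod n)"
begin

definition "D = gcd e (totient n)"

lemma Dpos: "D > 0" using epos by (simp add: D_def)
lemma Ddvd: "D dvd totient n" "D dvd e" by (simp_all add: D_def)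

lemma lam_eq: "ord n q = totient n div D"
proof -
  have "ord n q = ord n (g ^ e)" using ord_cong[OF ge] by simp
  also have "\<dots> = totient n div D" using ord_power[OF cg] ordg by (simp add: D_def)
  finally show ?thesis .
qed

lemma phi_eq: "totient n = D * ord n q"
  using lam_eq Ddvd(1) by simp

lemma dlt_eq: "totient n div ord n q = D"
  using phi_eq Dpos by (metis div_mult_self1_is_m ord_eq_0 cq gr0I mult.commute
      mult_zero_right phipos less_irrefl)

lemma mem1: assumes "D dvd x" shows "\<exists>j. [g ^ x = q ^ j] (mod n)"
proof -
  obtain a b where ab: "e * a = totient n * b + D"
    using bezout_nat[of e "totient n"] epos by (auto simp: D_def)
  have "[g ^ (e * a) = g ^ D] (mod n)"
    unfolding expcong ab by (simp add: cong_def)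
  moreover have "[q ^ a = g ^ (e * a)] (mod n)"
    using cong_pow[OF ge, of a] by (simp add: power_mult cong_sym)
  ultimately have qa: "[q ^ a = g ^ D] (mod n)" using cong_trans by blast
  from assms obtain c where c: "x = D * c" by (auto elim: dvdE)
  have "[(q ^ a) ^ c = (g ^ D) ^ c] (mod n)" using cong_pow[OF qa] .
  hence "[g ^ x = q ^ (a * c)] (mod n)" by (simp add: c power_mult cong_sym)
  thus ?thesis by blast
qed

lemma mem2: assumes "[g ^ x = q ^ j] (mod n)" shows "D dvd x"
proof -
  have "[q ^ j = g ^ (e * j)] (mod n)"
    using cong_pow[OF ge, of j] by (simp add: power_mult cong_sym)
  with assms have "[g ^ x = g ^ (e * j)] (mod n)" using cong_trans by blast
  hence "[x = e * j] (mod totient n)" using expcong by blast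
  hence "[x = e * j] (mod D)" using Ddvd(1) cong_dvd_modulus_nat by blast
  moreover have "D dvd e * j" using Ddvd(2) by simp
  ultimately show ?thesis using cong_dvd_iff by blast
qed

context
  fixes h :: nat
  assumes hg: "[int g ^ h = -1] (mod int n)" and h2: "2 * h = totient n"
begin

lemma not_dvd_h: "\<not> D dvd h"
proof
  assume "D dvd h"
  then obtain j where j: "[g ^ h = q ^ j] (mod n)" using mem1 by blast
  hence "[int (g ^ h) = int (q ^ j)] (mod int n)" using cong_int_iff by blast
  hence "[int q ^ j = int g ^ h] (mod int n)" by (simp add: cong_sym)
  with hg have "[int q ^ j = -1] (mod int n)" using cong_trans by blast
  with neg show False by blast
qed

lemma lam_odd: "odd (ord n q)"
proof
  assume "even (ord n q)"
  then obtain \<mu> where "ord n q = 2 * \<mu>" by auto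
  with phi_eq h2 have "h = D * \<mu>" by simp
  with not_dvd_h show False by simp
qed

lemma D_even: "even D"
  using lam_odd phi_eq h2 by (metis dvd_triv_left even_mult_iff)

lemma h_cong: "[h = D div 2] (mod D)"
proof -
  obtain \<mu> where mu: "ord n q = 2 * \<mu> + 1" using lam_odd oddE by blast
  obtain \<nu> where nu: "D = 2 * \<nu>" using D_even by auto
  have "2 * h = 2 * (D * \<mu> + \<nu>)" using phi_eq h2 mu nu by (simp add: algebra_simps)
  hence "h = D * \<mu> + D div 2" using nu by simp
  thus ?thesis by (simp add: cong_def)
qed

lemma sign_pow: "[(-1::int) ^ a * int g ^ k = int (g ^ (a * h + k))] (mod int n)"
proof -
  have "[(int g ^ h) ^ a = (-1) ^ a] (mod int n)" using cong_pow[OF hg] .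
  hence "[(int g ^ h) ^ a * int g ^ k = (-1) ^ a * int g ^ k] (mod int n)"
    using cong_scalar_right by blast
  moreover have "int (g ^ (a * h + k)) = (int g ^ h) ^ a * int g ^ k"
    by (simp add: power_add mult.commute[of a h] power_mult)
  ultimately show ?thesis by (simp add: cong_sym)
qed

lemma D1:
  assumes "a \<le> 1" "a' \<le> 1" "k < D div 2" "k' < D div 2"
    and "[(-1) ^ a * int g ^ k = (-1) ^ a' * int g ^ k' * int q ^ j] (mod int n)"
  shows "a = a' \<and> k = k'"
proof -
  have "[int q ^ j = int (g ^ (e * j))] (mod int n)"
    using cong_pow[OF ge, of j] cong_int_iff by (metis of_nat_power power_mult cong_sym)
  hence "[(-1) ^ a' * int g ^ k' * int q ^ j = int (g ^ (a' * h + k')) * int (g ^ (e * j))] (mod int n)"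
    using sign_pow cong_mult by blast
  with assms(5) sign_pow[of a k]
  have "[int (g ^ (a * h + k)) = int (g ^ (a' * h + k' + e * j))] (mod int n)"
    by (metis (no_types, lifting) cong_sym cong_trans of_nat_mult power_add)
  hence "[g ^ (a * h + k) = g ^ (a' * h + k' + e * j)] (mod n)" using cong_int_iff by blast
  hence "[a * h + k = a' * h + k' + e * j] (mod totient n)" using expcong by blast
  hence c1: "[a * h + k = a' * h + k' + e * j] (mod D)" using Ddvd(1) cong_dvd_modulus_nat by blast
  have "[e * j = 0] (mod D)" using Ddvd(2) by (simp add: cong_0_iff)
  hence "[a' * h + k' + e * j = a' * h + k'] (mod D)" using cong_add_lcancel_0_nat by blast
  with c1 have c2: "[a * h + k = a' * h + k'] (mod D)" using cong_trans by blast
  have "[a * h + k = a * (D div 2) + k] (mod D)" "[a' * h + k' = a' * (D div 2) + k'] (mod D)"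
    using h_cong by (auto intro!: cong_add cong_scalar_left)
  with c2 have "[a * (D div 2) + k = a' * (D div 2) + k'] (mod D)"
    by (meson cong_sym cong_trans)
  moreover have "a * (D div 2) + k < D" "a' * (D div 2) + k' < D"
    using assms D_even by (auto simp: le_Suc_eq elim!: evenE)
  ultimately have "a * (D div 2) + k = a' * (D div 2) + k'"
    using cong_less_modulus_unique_nat by blast
  thus ?thesis using assms(1-4) by (auto simp: le_Suc_eq)
qed

lemma D2:
  assumes "coprime u (int n)"
  shows "\<exists>a k j. a \<le> 1 \<and> k < D div 2 \<and> [u = (-1) ^ a * int g ^ k * int q ^ j] (mod int n)"
proof -
  define x0 where "x0 = nat (u mod int n)"
  have x0: "int x0 = u mod int n" using n2 by (simp add: x0_def)
  have "coprime (u mod int n) (int n)" using assms n2 by simp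
  hence "coprime (int x0) (int n)" using x0 by simp
  hence "coprime x0 n" by simp
  then obtain x where "[g ^ x = x0] (mod n)" using primroot_gen[OF _ pr] n2 by fastforce
  hence "[int (g ^ x) = int x0] (mod int n)" using cong_int_iff by blast
  hence gx: "[int (g ^ x) = u] (mod int n)" using x0 by (simp add: cong_def)
  define \<rho> where "\<rho> = x mod D"
  define a where "a = (if \<rho> < D div 2 then 0 else 1::nat)"
  define k where "k = \<rho> - a * (D div 2)"
  have rho: "\<rho> < D" using Dpos by (simp add: \<rho>_def)
  have a1: "a \<le> 1" by (simp add: a_def)
  have k: "k < D div 2" using rho D_even by (auto simp: k_def a_def elim!: evenE)
  have ak: "a * (D div 2) + k = \<rho>" by (auto simp: k_def a_def)
  have "D \<le> totient n" using Ddvd(1) phipos by (simp add: dvd_imp_le)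
  hence "D div 2 \<le> h" using h2 by linarith
  hence le: "a * h + k \<le> x + totient n" using a1 k h2 by (auto simp: le_Suc_eq)
  have "[a * h + k = a * (D div 2) + k] (mod D)"
    using h_cong by (auto intro!: cong_add cong_scalar_left)
  also have "a * (D div 2) + k = x mod D" by (simp add: ak \<rho>_def)
  also have "[x mod D = x + totient n] (mod D)"
    using Ddvd(1) by (simp add: cong_def mod_add_right_eq[symmetric])
  finally have "[x + totient n = a * h + k] (mod D)" by (simp add: cong_sym)
  hence "D dvd (x + totient n - (a * h + k))" using le cong_altdef_nat by blast
  then obtain j where j: "[g ^ (x + totient n - (a * h + k)) = q ^ j] (mod n)"
    using mem1 by blast
  have "[g ^ (a * h + k) * g ^ (x + totient n - (a * h + k)) = g ^ (a * h + k) * q ^ j] (mod n)"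
    using j cong_scalar_left by blast
  moreover have "g ^ (a * h + k) * g ^ (x + totient n - (a * h + k)) = g ^ (x + totient n)"
    using le by (simp add: power_add[symmetric])
  moreover have "[g ^ (x + totient n) = g ^ x] (mod n)"
    unfolding expcong by (simp add: cong_def)
  ultimately have "[g ^ (a * h + k) * q ^ j = g ^ x] (mod n)"
    by (metis cong_sym cong_trans)
  hence "[int (g ^ (a * h + k) * q ^ j) = int (g ^ x)] (mod int n)" using cong_int_iff by blast
  hence c: "[int (g ^ (a * h + k)) * int q ^ j = u] (mod int n)" using gx
    by (metis cong_trans of_nat_mult of_nat_power)
  have "[(-1) ^ a * int g ^ k * int q ^ j = int (g ^ (a * h + k)) * int q ^ j] (mod int n)"
    using sign_pow cong_scalar_right by blast
  with c have "[u = (-1) ^ a * int g ^ k * int q ^ j] (mod int n)"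
    by (metis cong_sym cong_trans)
  with a1 k show ?thesis by blast
qed

end
end
end



lemma coset_shift:
  assumes "N > 0" "coprime N q" "[t' = t * int q ^ j] (mod int N)"
  shows "cyc_coset q N t' = cyc_coset q N t"
proof
  show "cyc_coset q N t' \<subseteq> cyc_coset q N t"
  proof
    fix y assume "y \<in> cyc_coset q N t'"
    then obtain i where y: "y = (t' * int q ^ i) mod int N" by (auto simp: cyc_coset_def)
    have "[t' * int q ^ i = t * int q ^ j * int q ^ i] (mod int N)"
      using assms(3) cong_scalar_right by blast
    hence "y = (t * int q ^ (j + i)) mod int N"
      by (simp add: y cong_def power_add mult.assoc)
    thus "y \<in> cyc_coset q N t" by (auto simp: cyc_coset_def)
  qed
next
  show "cyc_coset q N t \<subseteq> cyc_coset q N t'"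
  proof
    fix y assume "y \<in> cyc_coset q N t"
    then obtain i where y: "y = (t * int q ^ i) mod int N" by (auto simp: cyc_coset_def)
    define L where "L = ord N q"
    have L0: "L > 0" using assms by (simp add: L_def)
    have "[q ^ L = 1] (mod N)" using ord[of q N] by (simp add: L_def)
    hence "[int (q ^ L) = int 1] (mod int N)" using cong_int_iff by blast
    hence "[int q ^ L = 1] (mod int N)" by simp
    hence "[(int q ^ L) ^ j = 1] (mod int N)" using cong_pow by fastforce
    hence c0: "[int q ^ i * (int q ^ L) ^ j = int q ^ i * 1] (mod int N)" using cong_scalar_left by blast
    have jl: "j \<le> L * j" using L0 by simp
    hence e: "j + (i + L * j - j) = i + L * j" by arith
    have "int q ^ (j + (i + L * j - j)) = int q ^ i * (int q ^ L) ^ j"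
      by (simp only: e) (simp add: power_add power_mult)
    with c0 have "[int q ^ (j + (i + L * j - j)) = int q ^ i] (mod int N)"
      by simp
    hence c: "[t * int q ^ j * int q ^ (i + L * j - j) = t * int q ^ i] (mod int N)"
      using cong_scalar_left[of _ _ _ t] by (simp add: power_add mult.assoc)
    have "[t' * int q ^ (i + L * j - j) = t * int q ^ j * int q ^ (i + L * j - j)] (mod int N)"
      using assms(3) cong_scalar_right by blast
    with c have "[t' * int q ^ (i + L * j - j) = t * int q ^ i] (mod int N)" using cong_trans by blast
    hence "y = (t' * int q ^ (i + L * j - j)) mod int N" by (simp add: y cong_def)
    thus "y \<in> cyc_coset q N t'" by (auto simp: cyc_coset_def)
  qed
qed

lemma coset_eqD:
  assumes "cyc_coset q N t = cyc_coset q N t'"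
  shows "\<exists>i. [t' = t * int q ^ i] (mod int N)"
proof -
  have "t' mod int N \<in> cyc_coset q N t'" unfolding cyc_coset_def by (rule CollectI, rule exI[of _ 0]) simp
  with assms obtain i where "t' mod int N = (t * int q ^ i) mod int N" by (auto simp: cyc_coset_def)
  thus ?thesis by (auto simp: cong_def)
qed

lemma primroot_down:
  assumes l: "prime l" and r: "1 \<le> r" "r \<le> m" and pr: "residue_primroot (l ^ m) g"
  shows "residue_primroot (l ^ r) g"
proof -
  have l1: "l > 1" using l prime_gt_1_nat by blast
  have n1: "l ^ r > 1" using l1 r by (intro one_less_power) auto
  have m1: "l ^ m > 1" using l1 r by (intro one_less_power) auto
  have dvdrm: "l ^ r dvd l ^ m" using r by (simp add: le_imp_power_dvd)
  have cgm: "coprime (l ^ m) g" using pr by (simp add: residue_primroot_def)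
  hence clg: "coprime l g" using r by simp
  hence cg: "coprime (l ^ r) g" by simp
  define od where "od = ord (l ^ r) g"
  have opos: "od > 0" using cg by (simp add: od_def)
  have "od dvd totient (l ^ r)" using order_divides_totient[OF cg] by (simp add: od_def)
  moreover have "totient (l ^ r) > 0" using l1 by simp
  ultimately have le1: "od \<le> totient (l ^ r)" by (simp add: dvd_imp_le)
  have sub: "totatives (l ^ r) \<subseteq> (\<lambda>i. g ^ i mod l ^ r) ` {..<od}"
  proof
    fix x assume x: "x \<in> totatives (l ^ r)"
    hence cx: "coprime x (l ^ r)" and xpos: "x > 0" and xle: "x \<le> l ^ r" by (auto simp: in_totatives_iff)
    have "coprime x l" using cx r by simp
    hence "coprime x (l ^ m)" by simp
    then obtain i where "[g ^ i = x] (mod l ^ m)" using primroot_gen[OF m1 pr] by blast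
    hence gi: "[g ^ i = x] (mod l ^ r)" using dvdrm cong_dvd_modulus_nat by blast
    have "[g ^ (i mod od) = g ^ i] (mod l ^ r)"
      using order_divides_expdiff[OF cg] by (simp add: od_def cong_def)
    with gi have "[g ^ (i mod od) = x] (mod l ^ r)" using cong_trans by blast
    moreover have "x \<noteq> l ^ r"
    proof
      assume "x = l ^ r" with cx n1 r l1 show False by simp
    qed
    with xle have "x < l ^ r" by simp
    ultimately have "g ^ (i mod od) mod l ^ r = x" by (simp add: cong_def)
    moreover have "i mod od < od" using opos by simp
    ultimately show "x \<in> (\<lambda>i. g ^ i mod l ^ r) ` {..<od}" by force
  qed
  have "totient (l ^ r) = card (totatives (l ^ r))" by (simp add: totient_def)
  also have "\<dots> \<le> card ((\<lambda>i. g ^ i mod l ^ r) ` {..<od})" using sub by (intro card_mono) auto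
  also have "\<dots> \<le> card {..<od}" by (rule card_image_le) simp
  finally have "totient (l ^ r) \<le> od" by simp
  with le1 have "od = totient (l ^ r)" by simp
  thus ?thesis using cg n1 l1 by (simp add: residue_primroot_def od_def)
qed

lemma neg_lemma:
  assumes l: "prime l" "odd l" and clq: "coprime l q" and od: "odd (ord l q)" and r: "1 \<le> r"
  shows "\<not> [int q ^ j = -1] (mod int (l ^ r))"
proof
  assume a: "[int q ^ j = -1] (mod int (l ^ r))"
  have "int l dvd int (l ^ r)" using r by (simp add: dvd_power)
  hence a1: "[int q ^ j = -1] (mod int l)" using a cong_dvd_modulus by blast
  hence "[(int q ^ j) ^ 2 = (-1) ^ 2] (mod int l)" using cong_pow by blast
  hence "[int (q ^ (2 * j)) = int 1] (mod int l)" by (simp add: power_mult[symmetric] mult.commute)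
  hence "[q ^ (2 * j) = 1] (mod l)" using cong_int_iff by blast
  hence "ord l q dvd 2 * j" using ord_divides by blast
  moreover have "coprime (ord l q) 2" using od by simp
  ultimately have "ord l q dvd j" using coprime_dvd_mult_right_iff by blast
  hence "[q ^ j = 1] (mod l)" using ord_divides by blast
  hence "[int (q ^ j) = int 1] (mod int l)" using cong_int_iff by blast
  hence "[int q ^ j = 1] (mod int l)" by simp
  with a1 have "[1 = -1] (mod int l)" by (metis cong_sym cong_trans)
  hence "int l dvd 2" by (simp add: cong_iff_dvd_diff)
  hence "l dvd 2" by presburger
  hence "l \<le> 2" by (simp add: dvd_imp_le)
  with l show False using prime_ge_2_nat[of l] by (cases "l = 2") auto
qed

lemma decomp:
  assumes "l > 1" "(t::nat) > 0"
  shows "\<exists>v w. t = l ^ v * w \<and> \<not> l dvd w"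
  using assms(2)
proof (induction t rule: less_induct)
  case (less t)
  show ?case
  proof (cases "l dvd t")
    case True
    then obtain t' where t': "t = l * t'" by auto
    with less.prems have "t' > 0" by simp
    moreover have "t' < t" using t' assms(1) \<open>t' > 0\<close> by simp
    ultimately obtain v w where "t' = l ^ v * w" "\<not> l dvd w" using less.IH by blast
    hence "t = l ^ Suc v * w \<and> \<not> l dvd w" using t' by simp
    thus ?thesis by blast
  next
    case False
    hence "t = l ^ 0 * t \<and> \<not> l dvd t" by simp
    thus ?thesis by blast
  qed
qed

lemma val_lt:
  assumes "prime l" "r < r'" "r' \<le> m" "\<not> int l dvd w'"
    and "[int (l ^ (m - r)) * w = int (l ^ (m - r')) * w'] (mod int (l ^ m))"
  shows False
proof -
  define L where "L = int l"
  have L0: "L \<noteq> 0" using assms(1) by (simp add: L_def prime_gt_0_nat)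
  have "L ^ (m - r) dvd L ^ m" by (simp add: le_imp_power_dvd)
  hence "L ^ (m - r) dvd L ^ (m - r) * w - L ^ (m - r') * w'"
    using assms(5) by (simp add: L_def cong_iff_dvd_diff dvd_trans)
  with dvd_diff[OF dvd_triv_left[of "L ^ (m - r)" w]]
  have "L ^ (m - r) dvd L ^ (m - r) * w - (L ^ (m - r) * w - L ^ (m - r') * w')"
    by blast
  hence "L ^ (m - r) dvd L ^ (m - r') * w'" by simp
  moreover have "m - r = (m - r') + (r' - r)" using assms by simp
  ultimately have "L ^ (m - r') * L ^ (r' - r) dvd L ^ (m - r') * w'" by (simp add: power_add)
  hence "L ^ (r' - r) dvd w'" using L0 by simp
  moreover have "L dvd L ^ (r' - r)" using assms by (simp add: dvd_power)
  ultimately have "L dvd w'" using dvd_trans by blast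
  with assms(4) show False by (simp add: L_def)
qed

lemma val_eq:
  assumes "prime l" "1 \<le> r" "r \<le> m" "1 \<le> r'" "r' \<le> m" "\<not> int l dvd w" "\<not> int l dvd w'"
    and c: "[int (l ^ (m - r)) * w = int (l ^ (m - r')) * w'] (mod int (l ^ m))"
  shows "r = r' \<and> [w = w'] (mod int (l ^ r))"
proof -
  have "\<not> r < r'" using val_lt[OF assms(1) _ assms(5,7) c] by blast
  moreover have "\<not> r' < r" using val_lt[OF assms(1) _ assms(3,6)] c cong_sym by blast
  ultimately have rr: "r = r'" by simp
  define L where "L = int l"
  have L0: "L \<noteq> 0" using assms(1) by (simp add: L_def prime_gt_0_nat)
  have "L ^ m = L ^ (m - r) * L ^ r" using assms by (simp add: power_add[symmetric])
  with c rr have "L ^ (m - r) * L ^ r dvd L ^ (m - r) * (w - w')"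
    by (simp add: L_def cong_iff_dvd_diff right_diff_distrib)
  hence "L ^ r dvd w - w'" using L0 by simp
  with rr show ?thesis by (simp add: L_def cong_iff_dvd_diff)
qed

lemma nonzero_mod:
  assumes "prime l" "1 \<le> r" "r \<le> m" "\<not> int l dvd w"
  shows "(int (l ^ (m - r)) * w) mod int (l ^ m) \<noteq> 0"
proof
  assume "(int (l ^ (m - r)) * w) mod int (l ^ m) = 0"
  hence d: "int l ^ m dvd int l ^ (m - r) * w" by (simp add: mod_eq_0_iff_dvd)
  have L0: "int l \<noteq> 0" using assms(1) by (simp add: prime_gt_0_nat)
  have "int l ^ m = int l ^ (m - r) * int l ^ r" using assms by (simp add: power_add[symmetric])
  with d have "int l ^ (m - r) * int l ^ r dvd int l ^ (m - r) * w" by simp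
  hence "int l ^ r dvd w" using L0 by simp
  moreover have "int l dvd int l ^ r" using assms by (simp add: dvd_power)
  ultimately show False using assms(4) dvd_trans by blast
qed

lemma unit_w:
  assumes "prime l" "coprime l g" "coprime l q" "s \<in> {1, -1::int}"
  shows "\<not> int l dvd (s * int g ^ k * int q ^ j)"
proof
  assume d: "int l dvd (s * int g ^ k * int q ^ j)"
  have "coprime (int l) (int g)" "coprime (int l) (int q)" using assms(2,3) by simp_all
  moreover have "coprime (int l) s" using assms(4) by auto
  ultimately have "coprime (int l) (s * int g ^ k * int q ^ j)" by simp
  with d have "is_unit (int l)" by (meson coprime_common_divisor dvd_refl)
  with assms(1) show False by (simp add: prime_gt_1_nat)
qed

lemma setup_r:
  assumes l: "prime l" "odd l" and clq: "coprime l q" and od: "odd (ord l q)"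
    and pr: "residue_primroot (l ^ m) g" and r: "1 \<le> r" "r \<le> m"
  shows "\<exists>e h. 2 < l ^ r \<and> residue_primroot (l ^ r) g \<and> coprime (l ^ r) q
    \<and> (\<forall>j. \<not> [int q ^ j = -1] (mod int (l ^ r))) \<and> e > 0 \<and> [g ^ e = q] (mod l ^ r)
    \<and> [int g ^ h = -1] (mod int (l ^ r)) \<and> 2 * h = totient (l ^ r) \<and> D (l ^ r) e = dlt q l r"
proof -
  have l2: "l > 2" using l prime_ge_2_nat[of l] by (cases "l = 2") auto
  have "l \<le> l ^ r" using r l2 by (simp add: self_le_power)
  hence n2: "2 < l ^ r" using l2 by linarith
  have prr: "residue_primroot (l ^ r) g" using primroot_down[OF l(1) r pr] .
  have cq: "coprime (l ^ r) q" using clq by simp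
  have neg: "\<And>j. \<not> [int q ^ j = -1] (mod int (l ^ r))" using neg_lemma[OF l clq od r(1)] by blast
  obtain i where i: "[g ^ i = q] (mod l ^ r)"
    using primroot_gen[OF _ prr] n2 cq by (metis coprime_commute less_trans one_less_numeral_iff semiring_norm(76))
  define e where "e = i + totient (l ^ r)"
  have epos: "e > 0" using l2 by (simp add: e_def)
  have ge: "[g ^ e = q] (mod l ^ r)"
  proof -
    have "[g ^ e = g ^ i] (mod l ^ r)"
      using expcong[OF n2 prr cq neg] by (simp add: e_def cong_def)
    with i show ?thesis using cong_trans by blast
  qed
  obtain h where h: "[int g ^ h = -1] (mod int (l ^ r))" "2 * h = totient (l ^ r)"
    using half_exists[OF n2 prr cq neg] by blast
  have "D (l ^ r) e = dlt q l r"
    using dlt_eq[OF n2 prr cq neg epos ge] by (simp add: dlt_def lam_def)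
  with n2 prr cq neg epos ge h show ?thesis by blast
qed

lemma listed_eq:
  assumes "1 \<le> r" "r \<le> m" "coprime l q" "prime l"
  shows "listed_set q l m g s r k = cyc_coset q (l ^ m) (s * int (l ^ (m - r)) * int g ^ k)"
proof -
  have cq: "coprime (l ^ r) q" using assms by simp
  hence lpos: "lam q l r > 0" using assms by (simp add: lam_def prime_gt_0_nat)
  show ?thesis
  proof
    show "listed_set q l m g s r k \<subseteq> cyc_coset q (l ^ m) (s * int (l ^ (m - r)) * int g ^ k)"
      by (auto simp: listed_set_def cyc_coset_def)
  next
    show "cyc_coset q (l ^ m) (s * int (l ^ (m - r)) * int g ^ k) \<subseteq> listed_set q l m g s r k"
    proof
      fix y assume "y \<in> cyc_coset q (l ^ m) (s * int (l ^ (m - r)) * int g ^ k)"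
      then obtain i where y: "y = (s * int (l ^ (m - r)) * int g ^ k * int q ^ i) mod int (l ^ m)"
        by (auto simp: cyc_coset_def)
      define j where "j = i mod lam q l r"
      have j: "j < lam q l r" using lpos by (simp add: j_def)
      have "[q ^ i = q ^ j] (mod l ^ r)"
        using order_divides_expdiff[OF cq] by (simp add: j_def lam_def cong_def)
      hence "[int (q ^ i) = int (q ^ j)] (mod int (l ^ r))" using cong_int_iff by blast
      hence "[(s * int g ^ k) * int q ^ i = (s * int g ^ k) * int q ^ j] (mod int (l ^ r))"
        using cong_scalar_left by fastforce
      hence "[int (l ^ (m - r)) * ((s * int g ^ k) * int q ^ i) = int (l ^ (m - r)) * ((s * int g ^ k) * int q ^ j)] (mod int (l ^ (m - r)) * int (l ^ r))"
        using cong_cmult_leftI by blast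
      moreover have "int (l ^ (m - r)) * int (l ^ r) = int (l ^ m)"
        using assms by (simp add: power_add[symmetric])
      ultimately have "[s * int (l ^ (m - r)) * int g ^ k * int q ^ i = s * int (l ^ (m - r)) * int g ^ k * int q ^ j] (mod int (l ^ m))"
        by (simp add: ac_simps)
      hence "y = (s * int (l ^ (m - r)) * int g ^ k * int q ^ j) mod int (l ^ m)"
        by (simp add: y cong_def)
      with j show "y \<in> listed_set q l m g s r k" by (auto simp: listed_set_def)
    qed
  qed
qed

lemma sign_rep: "s \<in> {1, -1::int} \<Longrightarrow> (-1::int) ^ (if s = 1 then 0 else 1::nat) = s"
  by auto

theorem lemma4p3:
  fixes q l m g :: nat
  assumes "primepow q"
    and "prime l" and "odd l" and "coprime l q"
    and "m > 0"
    and "odd (ord l q)"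
    and "residue_primroot (l ^ m) g"
  defines "Idx \<equiv> {(r, k, s). 1 \<le> r \<and> r \<le> m \<and> k + 1 \<le> dlt q l r div 2 \<and> s \<in> {1::int, -1}}"
    and "F \<equiv> (\<lambda>x. case x of None \<Rightarrow> {0::int}
                  | Some (r, k, s) \<Rightarrow> listed_set q l m g s r k)"
  shows "cyc_coset q (l ^ m) 0 = {0}
     \<and> (\<forall>(r, k, s) \<in> Idx.
          listed_set q l m g s r k = cyc_coset q (l ^ m) (s * int (l ^ (m - r)) * int g ^ k))
     \<and> inj_on F (insert None (Some ` Idx))
     \<and> F ` (insert None (Some ` Idx)) = {cyc_coset q (l ^ m) t | t. t \<in> {0..<int (l ^ m)}}"
proof -
  note l = assms(2,3) and clq = assms(4) and od = assms(6) and pr = assms(7)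
  have l1: "l > 1" using l(1) prime_gt_1_nat by blast
  have N0: "l ^ m > 0" using l1 by simp
  have cNq: "coprime (l ^ m) q" using clq by simp
  have clg: "coprime l g" using pr assms(5) by (simp add: residue_primroot_def)
  have P1: "cyc_coset q (l ^ m) 0 = {0}" by (auto simp: cyc_coset_def)
  have P2: "\<forall>(r, k, s) \<in> Idx.
          listed_set q l m g s r k = cyc_coset q (l ^ m) (s * int (l ^ (m - r)) * int g ^ k)"
    using listed_eq[OF _ _ clq l(1)] by (auto simp: Idx_def)
  have FS: "F (Some (r, k, s)) = cyc_coset q (l ^ m) (s * int (l ^ (m - r)) * int g ^ k)"
    if "(r, k, s) \<in> Idx" for r k s
    using P2 that by (auto simp: F_def)
  have nz: "F (Some (r, k, s)) \<noteq> {0}" if "(r, k, s) \<in> Idx" for r k s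
  proof
    assume a: "F (Some (r, k, s)) = {0}"
    have r: "1 \<le> r" "r \<le> m" and s: "s \<in> {1, -1}" using that by (auto simp: Idx_def)
    have "(s * int (l ^ (m - r)) * int g ^ k * int q ^ 0) mod int (l ^ m) \<in> cyc_coset q (l ^ m) (s * int (l ^ (m - r)) * int g ^ k)"
      unfolding cyc_coset_def by blast
    with a FS[OF that] have z: "(int (l ^ (m - r)) * (s * int g ^ k * int q ^ 0)) mod int (l ^ m) = 0"
      by (simp add: ac_simps)
    have nd: "\<not> int l dvd (s * int g ^ k * int q ^ 0)" using unit_w[OF l(1) clg clq s] .
    show False using nonzero_mod[OF l(1) r nd] z by contradiction
  qed
  have inj2: "r = r' \<and> k = k' \<and> s = s'"
    if I: "(r, k, s) \<in> Idx" "(r', k', s') \<in> Idx" and E: "F (Some (r, k, s)) = F (Some (r', k', s'))"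
    for r k s r' k' s'
  proof -
    have r: "1 \<le> r" "r \<le> m" and s: "s \<in> {1, -1}" and kk: "k + 1 \<le> dlt q l r div 2"
      using I(1) by (auto simp: Idx_def)
    have r': "1 \<le> r'" "r' \<le> m" and s': "s' \<in> {1, -1}" and kk': "k' + 1 \<le> dlt q l r' div 2"
      using I(2) by (auto simp: Idx_def)
    from E FS[OF I(1)] FS[OF I(2)] obtain i where
      "[s' * int (l ^ (m - r')) * int g ^ k' = s * int (l ^ (m - r)) * int g ^ k * int q ^ i] (mod int (l ^ m))"
      using coset_eqD by metis
    hence "[int (l ^ (m - r')) * (s' * int g ^ k' * int q ^ 0) = int (l ^ (m - r)) * (s * int g ^ k * int q ^ i)] (mod int (l ^ m))"
      by (simp add: ac_simps)
    from val_eq[OF l(1) r' r unit_w[OF l(1) clg clq s'] unit_w[OF l(1) clg clq s] this]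
    have rr: "r' = r" and c: "[s' * int g ^ k' * int q ^ 0 = s * int g ^ k * int q ^ i] (mod int (l ^ r'))"
      by auto
    obtain e h where st: "2 < l ^ r" "residue_primroot (l ^ r) g" "coprime (l ^ r) q"
      "\<forall>j. \<not> [int q ^ j = -1] (mod int (l ^ r))" "e > 0" "[g ^ e = q] (mod l ^ r)"
      "[int g ^ h = -1] (mod int (l ^ r))" "2 * h = totient (l ^ r)" "D (l ^ r) e = dlt q l r"
      using setup_r[OF l clq od pr r] by blast
    define a where "a = (if s' = 1 then 0 else 1::nat)"
    define a' where "a' = (if s = 1 then 0 else 1::nat)"
    have sa: "(-1) ^ a = s'" "(-1) ^ a' = s" using sign_rep[OF s] sign_rep[OF s'] by (auto simp: a_def a'_def)
    have cc: "[(-1) ^ a * int g ^ k' = (-1) ^ a' * int g ^ k * int q ^ i] (mod int (l ^ r))"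
      using c rr sa by simp
    have ha: "a \<le> 1" "a' \<le> 1" by (auto simp: a_def a'_def)
    have hk: "k' < D (l ^ r) e div 2" "k < D (l ^ r) e div 2" using kk kk' rr st(9) by auto
    have "a = a' \<and> k' = k"
      by (rule D1[OF st(1,2,3) st(4)[rule_format] st(5,6,7,8) ha hk cc])
    with sa rr show ?thesis by auto
  qed
  have P3: "inj_on F (insert None (Some ` Idx))"
  proof (rule inj_onI)
    fix x y assume x: "x \<in> insert None (Some ` Idx)" and y: "y \<in> insert None (Some ` Idx)"
      and E: "F x = F y"
    show "x = y"
    proof (cases x)
      case None
      show ?thesis
      proof (cases y)
        case None with \<open>x = None\<close> show ?thesis by simp
      next
        case (Some b)
        then obtain r k s where b: "y = Some (r, k, s)" "(r, k, s) \<in> Idx" using y by (cases b) auto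
        with E None nz[OF b(2)] show ?thesis by (simp add: F_def)
      qed
    next
      case (Some b)
      then obtain r k s where b: "x = Some (r, k, s)" "(r, k, s) \<in> Idx" using x by (cases b) auto
      show ?thesis
      proof (cases y)
        case None with E b nz[OF b(2)] show ?thesis by (simp add: F_def)
      next
        case (Some c)
        then obtain r' k' s' where c: "y = Some (r', k', s')" "(r', k', s') \<in> Idx" using y by (cases c) auto
        from inj2[OF b(2) c(2)] E b c show ?thesis by simp
      qed
    qed
  qed
  have P4a: "F ` (insert None (Some ` Idx)) \<subseteq> {cyc_coset q (l ^ m) t | t. t \<in> {0..<int (l ^ m)}}"
  proof
    fix Y assume "Y \<in> F ` (insert None (Some ` Idx))"
    then obtain x where x: "x \<in> insert None (Some ` Idx)" "Y = F x" by blast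
    show "Y \<in> {cyc_coset q (l ^ m) t | t. t \<in> {0..<int (l ^ m)}}"
    proof (cases x)
      case None
      hence "Y = cyc_coset q (l ^ m) 0" using x P1 by (simp add: F_def)
      thus ?thesis using N0 by auto
    next
      case (Some b)
      then obtain r k s where b: "x = Some (r, k, s)" "(r, k, s) \<in> Idx" using x by (cases b) auto
      define t where "t = s * int (l ^ (m - r)) * int g ^ k"
      have "Y = cyc_coset q (l ^ m) t" using FS[OF b(2)] x b by (simp add: t_def)
      also have "\<dots> = cyc_coset q (l ^ m) (t mod int (l ^ m))"
        using coset_shift[OF N0 cNq, of "t mod int (l ^ m)" t 0] by (simp add: cong_def)
      finally show ?thesis using N0 by auto
    qed
  qed
  have P4b: "{cyc_coset q (l ^ m) t | t. t \<in> {0..<int (l ^ m)}} \<subseteq> F ` (insert None (Some ` Idx))"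
  proof
    fix Y assume "Y \<in> {cyc_coset q (l ^ m) t | t. t \<in> {0..<int (l ^ m)}}"
    then obtain t where t: "Y = cyc_coset q (l ^ m) t" "0 \<le> t" "t < int (l ^ m)" by auto
    show "Y \<in> F ` (insert None (Some ` Idx))"
    proof (cases "t = 0")
      case True
      hence "Y = F None" using t P1 by (simp add: F_def)
      thus ?thesis by blast
    next
      case False
      define tn where "tn = nat t"
      have tn1: "int tn = t" "tn > 0" using t False by (auto simp: tn_def)
      have "int tn < int (l ^ m)" using t(3) tn1 by simp
      hence "tn < l ^ m" by (simp only: of_nat_less_iff)
      note tn = tn1 this
      obtain v w where vw: "tn = l ^ v * w" "\<not> l dvd w" using decomp[OF l1 tn(2)] by blast
      have "w > 0" using vw tn(2) by (cases w) auto
      hence "l ^ v \<le> tn" using vw by simp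
      hence "l ^ v < l ^ m" using tn by linarith
      hence vm: "v < m" by (rule power_less_imp_less_exp[OF l1])
      define r where "r = m - v"
      have r: "1 \<le> r" "r \<le> m" "m - r = v" using vm by (auto simp: r_def)
      obtain e h where st: "2 < l ^ r" "residue_primroot (l ^ r) g" "coprime (l ^ r) q"
        "\<forall>j. \<not> [int q ^ j = -1] (mod int (l ^ r))" "e > 0" "[g ^ e = q] (mod l ^ r)"
        "[int g ^ h = -1] (mod int (l ^ r))" "2 * h = totient (l ^ r)" "D (l ^ r) e = dlt q l r"
        using setup_r[OF l clq od pr r(1,2)] by blast
      have "coprime l w" using vw(2) l(1) by (simp add: prime_imp_coprime)
      hence "coprime (int w) (int (l ^ r))" by (simp add: coprime_commute)
      then obtain a k j where akj: "a \<le> 1" "k < D (l ^ r) e div 2"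
        "[int w = (-1) ^ a * int g ^ k * int q ^ j] (mod int (l ^ r))"
        using D2[OF st(1,2,3) st(4)[rule_format] st(5,6,7,8)] by blast
      define s where "s = ((-1::int) ^ a)"
      have s: "s \<in> {1, -1}" using akj(1) by (auto simp: s_def le_Suc_eq)
      have I: "(r, k, s) \<in> Idx" using r akj(2) st(9) s by (auto simp: Idx_def)
      have "[int (l ^ (m - r)) * int w = int (l ^ (m - r)) * ((-1) ^ a * int g ^ k * int q ^ j)] (mod int (l ^ (m - r)) * int (l ^ r))"
        using cong_cmult_leftI[OF akj(3)] by blast
      moreover have "int (l ^ (m - r)) * int (l ^ r) = int (l ^ m)"
        using r(1,2) by (simp add: power_add[symmetric])
      moreover have "int (l ^ (m - r)) * int w = t" using tn(1) vw(1) r(3) by simp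
      ultimately have "[t = s * int (l ^ (m - r)) * int g ^ k * int q ^ j] (mod int (l ^ m))"
        by (simp add: s_def ac_simps)
      hence "cyc_coset q (l ^ m) t = cyc_coset q (l ^ m) (s * int (l ^ (m - r)) * int g ^ k)"
        using coset_shift[OF N0 cNq] by blast
      hence "Y = F (Some (r, k, s))" using t(1) FS[OF I] by simp
      thus ?thesis using I by blast
    qed
  qed
  show ?thesis using P1 P2 P3 P4a P4b by blast
qed


end
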